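(* Let $G$ be a graph and let $p\ge 2$ be an integer. Then $\mathrm{id}^{\leq p}(G)\leq \frac{|E(G)|}{\lfloor p/2\rfloor}+\chi'_s(G)$.
   Context: A matching $M$ of $G$ is induced if every edge of $G$ joining two endvertices of edges of $M$ belongs to $M$. A strong edge-colouring of $G$ is an edge-colouring in which each colour class is an induced matching; $\chi'_s(G)$ (the strong chromatic index) is the minimum number of colours in a strong edge-colouring of $G$. For an oriented graph $D$ and $X\subseteq V(D)$, the inversion of $X$ reverses every arc with both endvertices in $X$; a $(\leq p)$-inversion is the inversion of a set of at most $p$ vertices. $\mathrm{id}^{\leq p}(G)$ is the maximum, over all ordered pairs $(\vec G_1,\vec G_2)$ of orientations of $G$, of the minimum number of $(\leq p)$-inversions transforming $\vec G_1$ into $\vec G_2$. *)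

theory Defs
  imports Complex_Main
begin

definition sgraph :: "'a set \<Rightarrow> 'a set set \<Rightarrow> bool" where
  "sgraph V E \<longleftrightarrow> finite V \<and> (\<forall>e\<in>E. \<exists>u v. e = {u, v} \<and> u \<noteq> v \<and> u \<in> V \<and> v \<in> V)"

definition orientation :: "'a set \<Rightarrow> 'a set set \<Rightarrow> ('a \<times> 'a) set \<Rightarrow> bool" where
  "orientation V E D \<longleftrightarrow>
     (\<forall>(u, v)\<in>D. {u, v} \<in> E) \<and>
     (\<forall>u v. {u, v} \<in> E \<longrightarrow> ((u, v) \<in> D \<longleftrightarrow> (v, u) \<notin> D))"

definition invert :: "'a set \<Rightarrow> ('a \<times> 'a) set \<Rightarrow> ('a \<times> 'a) set" where
  "invert X D = {(u, v). (u, v) \<in> D \<and> \<not> (u \<in> X \<and> v \<in> X)}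
              \<union> {(v, u) | u v. (u, v) \<in> D \<and> u \<in> X \<and> v \<in> X}"

definition invert_seq :: "'a set list \<Rightarrow> ('a \<times> 'a) set \<Rightarrow> ('a \<times> 'a) set" where
  "invert_seq Xs D = foldl (\<lambda>D' X. invert X D') D Xs"

definition inv_dist :: "nat \<Rightarrow> 'a set \<Rightarrow> ('a \<times> 'a) set \<Rightarrow> ('a \<times> 'a) set \<Rightarrow> nat" where
  "inv_dist p V D1 D2 = (LEAST k. \<exists>Xs. length Xs = k \<and>
      (\<forall>X\<in>set Xs. X \<subseteq> V \<and> card X \<le> p) \<and> invert_seq Xs D1 = D2)"

definition inv_diam :: "nat \<Rightarrow> 'a set \<Rightarrow> 'a set set \<Rightarrow> nat" where
  "inv_diam p V E = Max {inv_dist p V D1 D2 | D1 D2. orientation V E D1 \<and> orientation V E D2}"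

definition induced_matching :: "'a set set \<Rightarrow> 'a set set \<Rightarrow> bool" where
  "induced_matching E M \<longleftrightarrow> M \<subseteq> E \<and>
     (\<forall>e\<in>M. \<forall>f\<in>M. e \<noteq> f \<longrightarrow> e \<inter> f = {}) \<and>
     (\<forall>e\<in>E. e \<subseteq> \<Union>M \<longrightarrow> e \<in> M)"

definition strong_edge_colouring :: "'a set set \<Rightarrow> nat \<Rightarrow> ('a set \<Rightarrow> nat) \<Rightarrow> bool" where
  "strong_edge_colouring E k c \<longleftrightarrow> (\<forall>e\<in>E. c e < k) \<and>
     (\<forall>i<k. induced_matching E {e \<in> E. c e = i})"

definition strong_chromatic_index :: "'a set set \<Rightarrow> nat" where
  "strong_chromatic_index E = (LEAST k. \<exists>c. strong_edge_colouring E k c)"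

end

theory Submission
  imports Defs
begin

definition flipE :: "'a set set \<Rightarrow> ('a \<times> 'a) set \<Rightarrow> ('a \<times> 'a) set" where
  "flipE M D = {(x, y). ((x, y) \<in> D \<and> {x, y} \<notin> M) \<or> ((y, x) \<in> D \<and> {x, y} \<in> M)}"

fun pdisj :: "'a set set list \<Rightarrow> bool" where
  "pdisj [] = True"
| "pdisj (M # Ms) = (M \<inter> \<Union>(set Ms) = {} \<and> pdisj Ms)"

lemma pdisj_append: "pdisj A \<Longrightarrow> pdisj B \<Longrightarrow> \<Union>(set A) \<inter> \<Union>(set B) = {} \<Longrightarrow> pdisj (A @ B)"
  by (induction A) auto

lemma flip_flip: "A \<inter> B = {} \<Longrightarrow> flipE A (flipE B D) = flipE (A \<union> B) D"
  unfolding flipE_def by (auto simp: insert_commute)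

lemma flip_empty: "flipE {} D = D"
  unfolding flipE_def by auto

lemma flip_arcs: "\<forall>(u, v)\<in>D. {u, v} \<in> E \<Longrightarrow> \<forall>(u, v)\<in>flipE M D. {u, v} \<in> E"
  unfolding flipE_def by (auto simp: insert_commute)

lemma invert_flip:
  assumes "\<forall>(u, v)\<in>D. (u \<in> X \<and> v \<in> X) \<longleftrightarrow> {u, v} \<in> M"
  shows "invert X D = flipE M D"
  using assms unfolding invert_def flipE_def by (auto simp: insert_commute)

lemma invert_seq_Cons: "invert_seq (X # Xs) D = invert_seq Xs (invert X D)"
  unfolding invert_seq_def by simp

lemma seq_flip:
  assumes "\<forall>(u, v)\<in>D. {u, v} \<in> E" "pdisj Ms"
    "\<forall>M\<in>set Ms. \<forall>u v. {u, v} \<in> E \<longrightarrow> ((u \<in> \<Union>M \<and> v \<in> \<Union>M) \<longleftrightarrow> {u, v} \<in> M)"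
  shows "invert_seq (map Union Ms) D = flipE (\<Union>(set Ms)) D"
  using assms
proof (induction Ms arbitrary: D)
  case Nil
  then show ?case by (simp add: invert_seq_def flip_empty)
next
  case (Cons M Ms)
  have "invert (\<Union>M) D = flipE M D"
  proof (rule invert_flip, intro ballI)
    fix x assume "x \<in> D"
    then obtain u v where "x = (u, v)" "{u, v} \<in> E" using Cons.prems(1) by auto
    then show "case x of (u, v) \<Rightarrow> (u \<in> \<Union>M \<and> v \<in> \<Union>M) = ({u, v} \<in> M)"
      using Cons.prems(3) by simp
  qed
  moreover have "invert_seq (map Union Ms) (flipE M D) = flipE (\<Union>(set Ms)) (flipE M D)"
    apply (rule Cons.IH) using Cons.prems flip_arcs[OF Cons.prems(1)] by auto
  moreover have "flipE (\<Union>(set Ms)) (flipE M D) = flipE (\<Union>(set Ms) \<union> M) D"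
    apply (rule flip_flip) using Cons.prems(2) by auto
  ultimately show ?case by (simp add: invert_seq_Cons Un_commute)
qed

lemma chunks:
  assumes "finite S" "q \<ge> 1"
  shows "\<exists>Ms. \<Union>(set Ms) = S \<and> pdisj Ms \<and> (\<forall>M\<in>set Ms. M \<subseteq> S \<and> card M \<le> q)
           \<and> length Ms * q \<le> card S + q"
  using assms
proof (induction "card S" arbitrary: S rule: less_induct)
  case less
  show ?case
  proof (cases "card S \<le> q")
    case True
    then show ?thesis by (intro exI[of _ "[S]"]) auto
  next
    case False
    then obtain T where T: "T \<subseteq> S" "card T = q" "finite T"
      by (meson nat_le_linear obtain_subset_with_card_n)
    have "card (S - T) < card S" using T less.prems False
      by (simp add: card_Diff_subset)
    then obtain Ms where Ms: "\<Union>(set Ms) = S - T" "pdisj Ms" "\<forall>M\<in>set Ms. M \<subseteq> S - T \<and> card M \<le> q"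
      "length Ms * q \<le> card (S - T) + q"
      using less.hyps[of "S - T"] less.prems by auto
    have "card (S - T) = card S - q" using T less.prems by (simp add: card_Diff_subset)
    then show ?thesis using Ms T False
      by (intro exI[of _ "T # Ms"]) auto
  qed
qed


lemma sgraph_finE: "sgraph V E \<Longrightarrow> finite E"
  unfolding sgraph_def
  by (rule finite_subset[of E "Pow V"]) auto


lemma sg_neq: "sgraph V E \<Longrightarrow> {u, v} \<in> E \<Longrightarrow> u \<noteq> v"
  unfolding sgraph_def
proof
  assume a: "finite V \<and> (\<forall>e\<in>E. \<exists>u v. e = {u, v} \<and> u \<noteq> v \<and> u \<in> V \<and> v \<in> V)" "{u, v} \<in> E" "u = v"
  then obtain a b where ab: "{u} = {a, b}" "a \<noteq> b" by force
  from ab(1) have "a \<in> {u}" "b \<in> {u}" by auto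
  then show False using ab(2) by auto
qed

lemma sg_sub: "sgraph V E \<Longrightarrow> e \<in> E \<Longrightarrow> f \<in> E \<Longrightarrow> e \<subseteq> f \<Longrightarrow> e = f"
  unfolding sgraph_def
proof -
  assume a: "finite V \<and> (\<forall>e\<in>E. \<exists>u v. e = {u, v} \<and> u \<noteq> v \<and> u \<in> V \<and> v \<in> V)" "e \<in> E" "f \<in> E" "e \<subseteq> f"
  then obtain a b c d where "e = {a, b}" "a \<noteq> b" "f = {c, d}" by meson
  then show "e = f" using a(4) by blast
qed

lemma sg_edge: "sgraph V E \<Longrightarrow> e \<in> E \<Longrightarrow> \<exists>u v. e = {u, v} \<and> u \<noteq> v \<and> u \<in> V \<and> v \<in> V"
  unfolding sgraph_def by blast

lemma orient_exists:
  assumes "sgraph V E" shows "\<exists>D. orientation V E D"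
proof -
  define f where "f = (\<lambda>e::'a set. SOME x. x \<in> e)"
  define D where "D = {(u, v). {u, v} \<in> E \<and> u = f {u, v}}"
  have fin: "f {u, v} \<in> {u, v}" for u v unfolding f_def by (rule someI_ex) auto
  have neq: "{u, v} \<in> E \<Longrightarrow> u \<noteq> v" for u v
    by (rule sg_neq[OF assms(1)])
  have "orientation V E D"
    unfolding orientation_def D_def
  proof (intro conjI allI impI)
    fix u v assume "{u, v} \<in> E"
    then show "((u, v) \<in> {(u, v). {u, v} \<in> E \<and> u = f {u, v}}) = ((v, u) \<notin> {(u, v). {u, v} \<in> E \<and> u = f {u, v}})"
      using fin[of u v] neq[of u v] by (auto simp: insert_commute)
  qed auto
  then show ?thesis by blast
qed

lemma orient_flip:
  assumes "sgraph V E" "orientation V E D1" "orientation V E D2"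
  shows "D2 = flipE {e \<in> E. \<exists>u v. e = {u, v} \<and> (u, v) \<in> D1 \<and> (u, v) \<notin> D2} D1"
proof -
  have neq: "{u, v} \<in> E \<Longrightarrow> u \<noteq> v" for u v
    by (rule sg_neq[OF assms(1)])
  have o1: "\<And>u v. (u, v) \<in> D1 \<Longrightarrow> {u, v} \<in> E" "\<And>u v. {u, v} \<in> E \<Longrightarrow> ((u, v) \<in> D1 \<longleftrightarrow> (v, u) \<notin> D1)"
    using assms(2) unfolding orientation_def by auto
  have o2: "\<And>u v. (u, v) \<in> D2 \<Longrightarrow> {u, v} \<in> E" "\<And>u v. {u, v} \<in> E \<Longrightarrow> ((u, v) \<in> D2 \<longleftrightarrow> (v, u) \<notin> D2)"
    using assms(3) unfolding orientation_def by auto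
  show ?thesis
  proof (rule set_eqI)
    fix z :: "'a \<times> 'a"
    obtain x y where z: "z = (x, y)" by fastforce
    show "z \<in> D2 \<longleftrightarrow> z \<in> flipE {e \<in> E. \<exists>u v. e = {u, v} \<and> (u, v) \<in> D1 \<and> (u, v) \<notin> D2} D1"
    proof (cases "{x, y} \<in> E")
      case False
      have nE: "{y, x} \<notin> E" using False by (simp add: insert_commute)
      show ?thesis unfolding z flipE_def using o1(1)[of x y] o1(1)[of y x] o2(1)[of x y] False nE by auto
    next
      case True
      have xy: "{y, x} \<in> E" using True by (simp add: insert_commute)
      have "x \<noteq> y" by (rule neq[OF True])
      then have dd: "{x, y} = {u, v} \<longleftrightarrow> (u = x \<and> v = y) \<or> (u = y \<and> v = x)" for u v
        unfolding doubleton_eq_iff by blast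
      show ?thesis unfolding z flipE_def using o1(2)[OF True] o2(2)[OF True] o1(2)[OF xy] o2(2)[OF xy] True dd
        by auto
    qed
  qed
qed

lemma single_induced:
  assumes "sgraph V E" "K \<subseteq> E" "\<forall>e\<in>K. \<forall>f\<in>K. e = f"
  shows "induced_matching E K"
proof -
  have ne: "e \<in> E \<Longrightarrow> e \<noteq> {}" for e using sg_edge[OF assms(1)] by blast
  have two: "e \<in> E \<Longrightarrow> f \<in> E \<Longrightarrow> e \<subseteq> f \<Longrightarrow> e = f" for e f
    by (rule sg_sub[OF assms(1)])
  show ?thesis unfolding induced_matching_def
  proof (intro conjI ballI impI)
    fix e assume e: "e \<in> E" "e \<subseteq> \<Union>K"
    then obtain f where "f \<in> K" using ne by blast
    then have "\<Union>K = f" using assms(3) by auto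
    then show "e \<in> K" using two e \<open>f \<in> K\<close> assms(2) by auto
  qed (use assms in auto)
qed

lemma colouring_exists:
  assumes "sgraph V E" shows "\<exists>k c. strong_edge_colouring E k c"
proof -
  obtain h where h: "bij_betw h E {0..<card E}" using ex_bij_betw_finite_nat sgraph_finE[OF assms] by blast
  have "strong_edge_colouring E (card E) h"
    unfolding strong_edge_colouring_def
  proof (intro conjI allI impI ballI)
    fix e assume "e \<in> E" then show "h e < card E" using h by (auto simp: bij_betw_def)
  next
    fix i assume "i < card E"
    show "induced_matching E {e \<in> E. h e = i}"
      apply (rule single_induced[OF assms]) using h by (auto simp: bij_betw_def inj_on_def)
  qed
  then show ?thesis by blast
qed


lemma dist_bound:
  assumes sg: "sgraph V E" and p: "p \<ge> 2" and o1: "orientation V E D1" and o2: "orientation V E D2"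
    and col: "strong_edge_colouring E k c"
  shows "inv_dist p V D1 D2 * (p div 2) \<le> card E + k * (p div 2)"
proof -
  define q where "q = p div 2"
  have q1: "q \<ge> 1" using p unfolding q_def by auto
  have finE: "finite E" using sgraph_finE[OF sg] .
  define F where "F = {e \<in> E. \<exists>u v. e = {u, v} \<and> (u, v) \<in> D1 \<and> (u, v) \<notin> D2}"
  define C where "C i = {e \<in> F. c e = i}" for i
  have CE: "C i \<subseteq> E" for i unfolding C_def F_def by auto
  have finC: "finite (C i)" for i using CE finE finite_subset by metis
  have closed: "\<forall>u v. {u, v} \<in> E \<longrightarrow> ((u \<in> \<Union>M \<and> v \<in> \<Union>M) \<longleftrightarrow> {u, v} \<in> M)"
    if M: "M \<subseteq> C i" "i < k" for M i
  proof (intro allI impI iffI)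
    fix u v assume uv: "{u, v} \<in> E" "u \<in> \<Union>M \<and> v \<in> \<Union>M"
    define K where "K = {e \<in> E. c e = i}"
    have im: "induced_matching E K" using col M(2) unfolding strong_edge_colouring_def K_def by auto
    have MK: "M \<subseteq> K" using M(1) unfolding C_def F_def K_def by auto
    have "{u, v} \<subseteq> \<Union>K" using uv MK by auto
    note imd = im[unfolded induced_matching_def]
    have inK: "{u, v} \<in> K" using imd[THEN conjunct2, THEN conjunct2, rule_format, OF uv(1) \<open>{u, v} \<subseteq> \<Union>K\<close>] .
    obtain f where f: "f \<in> M" "u \<in> f" using uv by blast
    then have "f \<in> K" using MK by blast
    note dj = imd[THEN conjunct2, THEN conjunct1]
    have "{u, v} = f"
    proof (rule ccontr)
      assume "{u, v} \<noteq> f"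
      then have "{u, v} \<inter> f = {}" using dj[rule_format, OF inK \<open>f \<in> K\<close>] by simp
      moreover have "u \<in> {u, v} \<inter> f" using f(2) by simp
      ultimately show False by simp
    qed
    then show "{u, v} \<in> M" using f by simp
  qed auto
  have ind: "\<exists>Ms. \<Union>(set Ms) = (\<Union>i<j. C i) \<and> pdisj Ms \<and> (\<forall>M\<in>set Ms. \<exists>i<j. M \<subseteq> C i \<and> card M \<le> q)
      \<and> length Ms * q \<le> card (\<Union>i<j. C i) + j * q" for j
  proof (induction j)
    case 0
    show ?case by (rule exI[of _ "[]"]) simp
  next
    case (Suc j)
    from Suc.IH obtain Ms where Ms: "\<Union>(set Ms) = (\<Union>i<j. C i)" "pdisj Ms" "\<forall>M\<in>set Ms. \<exists>i<j. M \<subseteq> C i \<and> card M \<le> q"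
      "length Ms * q \<le> card (\<Union>i<j. C i) + j * q" by (elim exE conjE) (rule that)
    obtain Ns where Ns: "\<Union>(set Ns) = C j" "pdisj Ns" "\<forall>M\<in>set Ns. M \<subseteq> C j \<and> card M \<le> q"
      "length Ns * q \<le> card (C j) + q" using chunks[OF finC q1] by blast
    have disj: "C j \<inter> (\<Union>i<j. C i) = {}" unfolding C_def by auto
    have U: "(\<Union>i<Suc j. C i) = C j \<union> (\<Union>i<j. C i)" by (auto simp: lessThan_Suc)
    have cardU: "card (\<Union>i<Suc j. C i) = card (C j) + card (\<Union>i<j. C i)"
      unfolding U by (rule card_Un_disjoint) (use finC disj in auto)
    show ?case
    proof (intro exI[of _ "Ns @ Ms"] conjI)
      show "\<Union>(set (Ns @ Ms)) = (\<Union>i<Suc j. C i)" using Ns Ms U by auto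
      show "pdisj (Ns @ Ms)" by (rule pdisj_append) (use Ns Ms disj in auto)
      show "\<forall>M\<in>set (Ns @ Ms). \<exists>i<Suc j. M \<subseteq> C i \<and> card M \<le> q"
        using Ns(3) Ms(3) less_Suc_eq by auto
      show "length (Ns @ Ms) * q \<le> card (\<Union>i<Suc j. C i) + Suc j * q"
        using Ns(4) Ms(4) cardU by (simp add: algebra_simps)
    qed
  qed
  have ck: "\<forall>e\<in>E. c e < k" using col by (simp add: strong_edge_colouring_def)
  have UF: "(\<Union>i<k. C i) = F"
    using ck unfolding C_def F_def by auto
  obtain Ms where Ms: "\<Union>(set Ms) = F" "pdisj Ms" "\<forall>M\<in>set Ms. \<exists>i<k. M \<subseteq> C i \<and> card M \<le> q"
      "length Ms * q \<le> card F + k * q" using ind[of k] unfolding UF by blast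
  have arcs: "\<forall>(u, v)\<in>D1. {u, v} \<in> E" using o1 unfolding orientation_def by auto
  have cl: "\<forall>M\<in>set Ms. \<forall>u v. {u, v} \<in> E \<longrightarrow> ((u \<in> \<Union>M \<and> v \<in> \<Union>M) \<longleftrightarrow> {u, v} \<in> M)"
    using Ms(3) closed by blast
  have seq: "invert_seq (map Union Ms) D1 = D2"
    using seq_flip[OF arcs Ms(2) cl] Ms(1) orient_flip[OF sg o1 o2] unfolding F_def by simp
  have good: "\<forall>X\<in>set (map Union Ms). X \<subseteq> V \<and> card X \<le> p"
  proof
    fix X assume "X \<in> set (map Union Ms)"
    then obtain M i where M: "X = \<Union>M" "M \<subseteq> C i" "card M \<le> q" using Ms(3) by auto
    have ME: "M \<subseteq> E" using M(2) CE by blast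
    have "X \<subseteq> V" using M(1) ME sg_edge[OF sg] by blast
    moreover have "card X \<le> p"
    proof -
      have "card X \<le> sum card M" unfolding M(1) by (rule card_Union_le_sum_card)
      also have "\<dots> \<le> sum (\<lambda>_. 2) M"
      proof (rule sum_mono)
        fix e assume "e \<in> M"
        then obtain u v where "e = {u, v}" "u \<noteq> v" using ME sg_edge[OF sg] by blast
        then show "card e \<le> 2" by simp
      qed
      also have "\<dots> = 2 * card M" by simp
      also have "\<dots> \<le> p" using M(3) unfolding q_def by linarith
      finally show ?thesis .
    qed
    ultimately show "X \<subseteq> V \<and> card X \<le> p" by simp
  qed
  have "inv_dist p V D1 D2 \<le> length (map Union Ms)"
    unfolding inv_dist_def by (rule Least_le) (use seq good in blast)
  then have "inv_dist p V D1 D2 * q \<le> length Ms * q" by simp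
  also have "\<dots> \<le> card F + k * q" by (rule Ms(4))
  also have "\<dots> \<le> card E + k * q" using card_mono[OF finE] unfolding F_def by auto
  finally show ?thesis unfolding q_def .
qed

theorem mainTheorem14:
  fixes V :: "'a set" and E :: "'a set set" and p :: nat
  assumes "sgraph V E" and "p \<ge> 2"
  shows "real (inv_diam p V E)
           \<le> real (card E) / real (p div 2) + real (strong_chromatic_index E)"
proof -
  define k where "k = strong_chromatic_index E"
  define q where "q = p div 2"
  have q1: "q \<ge> 1" using assms(2) unfolding q_def by auto
  have "\<exists>c. strong_edge_colouring E k c"
    unfolding k_def strong_chromatic_index_def by (rule LeastI_ex) (rule colouring_exists[OF assms(1)])
  then obtain c where col: "strong_edge_colouring E k c" ..
  define S where "S = {inv_dist p V D1 D2 | D1 D2. orientation V E D1 \<and> orientation V E D2}"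
  have bnd: "x * q \<le> card E + k * q" if xS: "x \<in> S" for x
  proof -
    obtain D1 D2 where "x = inv_dist p V D1 D2" "orientation V E D1" "orientation V E D2"
      using xS[unfolded S_def] by auto
    then show ?thesis using dist_bound[OF assms(1) assms(2) _ _ col] unfolding q_def by simp
  qed
  have "S \<subseteq> {..card E + k * q}"
  proof
    fix x assume "x \<in> S"
    then have "x * q \<le> card E + k * q" by (rule bnd)
    moreover have "x \<le> x * q" using q1 by simp
    ultimately show "x \<in> {..card E + k * q}" using order_trans by blast
  qed
  then have finS: "finite S" by (rule finite_subset) simp
  obtain D where D: "orientation V E D" using orient_exists[OF assms(1)] ..
  have "inv_dist p V D D \<in> S" unfolding S_def using D by auto
  then have neS: "S \<noteq> {}" by auto
  have "Max S \<in> S" using Max_in[OF finS neS] .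
  then have "Max S * q \<le> card E + k * q" by (rule bnd)
  then have "real (Max S * q) \<le> real (card E + k * q)" by (simp only: of_nat_le_iff)
  then have "real (Max S) * real q \<le> real (card E) + real k * real q" by simp
  then have "real (Max S) \<le> real (card E) / real q + real k"
    using q1 by (simp add: field_simps)
  moreover have "inv_diam p V E = Max S" unfolding inv_diam_def S_def ..
  ultimately show ?thesis unfolding k_def q_def by simp
qed

end
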